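(* Let $\alpha_1,\dots,\alpha_K\in\mathbb R^d$, $\omega_1,\dots,\omega_K>0$, and for $\eta\in\mathbb R^d$ let $f(\theta)=-\sum_{k=1}^K\omega_k\exp(\alpha_k^{T}\theta)+\eta^{T}\theta-\tfrac12\theta^{T}\theta$, with unique maximizer $\hat\theta$, and let $I(\theta)=I_d+\sum_{k=1}^K\omega_k\exp(\alpha_k^{T}\theta)\alpha_k\alpha_k^{T}$. Then there is a constant $M>0$ not depending on $\eta$ such that $M^{-1}\frac{\exp(f(\hat\theta))}{\sqrt{\det I(\hat\theta)}}\le\int_{\mathbb R^d}(2\pi)^{-d/2}\exp(f(\theta))\,d\theta\le M\frac{\exp(f(\hat\theta))}{\sqrt{\det I(\hat\theta)}}.$ *)

theory Defs
  imports "HOL-Analysis.Analysis"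
begin

text \<open>Log-density f(theta) = - sum_k w_k exp(a_k . theta) + eta . theta - theta . theta / 2,
  with K terms indexed by k < K.\<close>
definition logdens :: "nat \<Rightarrow> (nat \<Rightarrow> real^'n) \<Rightarrow> (nat \<Rightarrow> real) \<Rightarrow> real^'n \<Rightarrow> real^'n \<Rightarrow> real" where
  "logdens K \<alpha> \<omega> \<eta> \<theta> =
     - (\<Sum>k<K. \<omega> k * exp (\<alpha> k \<bullet> \<theta>)) + \<eta> \<bullet> \<theta> - (1/2) * (\<theta> \<bullet> \<theta>)"

text \<open>Outer product a a^T.\<close>
definition outer :: "real^'n \<Rightarrow> real^'n \<Rightarrow> real^'n^'n" where
  "outer a b = (\<chi> i j. a $ i * b $ j)"

text \<open>I(theta) = I_d + sum_k w_k exp(a_k . theta) a_k a_k^T.\<close>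
definition infomat :: "nat \<Rightarrow> (nat \<Rightarrow> real^'n) \<Rightarrow> (nat \<Rightarrow> real) \<Rightarrow> real^'n \<Rightarrow> real^'n^'n" where
  "infomat K \<alpha> \<omega> \<theta> =
     mat 1 + (\<Sum>k<K. (\<omega> k * exp (\<alpha> k \<bullet> \<theta>)) *\<^sub>R outer (\<alpha> k) (\<alpha> k))"

end

theory Submission
  imports Defs "HOL-Probability.Distributions"
begin

typedef ('n::finite) ix = "{..<CARD('n)} :: nat set"
  by (rule exI[of _ 0]) simp

instantiation ix :: (finite) linorder begin
definition "a < b \<longleftrightarrow> Rep_ix a < Rep_ix b"
definition "a \<le> b \<longleftrightarrow> Rep_ix a \<le> Rep_ix b"
instance
  by intro_classes (auto simp add: less_eq_ix_def less_ix_def Rep_ix_inject)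
end

instance ix :: (finite) finite
proof
  have "(UNIV :: 'a ix set) = Abs_ix ` {..<CARD('a)}"
    by (metis Rep_ix_inverse UNIV_eq_I imageI Rep_ix)
  then show "finite (UNIV :: 'a ix set)" by (metis finite_imageI finite_lessThan)
qed

instance ix :: (finite) wellorder
proof -
  have "wf {(x :: 'a ix, y). x < y}"
    by(auto simp add: trancl_def tranclp_less intro!: finite_acyclic_wf acyclicI)
  thus "OFCLASS('a ix, wellorder_class)"
    by(rule wf_wellorderI) intro_classes
qed

lemma card_ix: "CARD('n::finite ix) = CARD('n)"
proof -
  have "(UNIV :: 'n ix set) = Abs_ix ` {..<CARD('n)}"
    by (metis Rep_ix_inverse UNIV_eq_I imageI Rep_ix)
  moreover have "inj_on (Abs_ix :: nat \<Rightarrow> 'n ix) {..<CARD('n)}"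
    by (metis Abs_ix_inverse inj_onI)
  ultimately show ?thesis by (metis card_image card_lessThan)
qed

lemma ex_bij_ix: "\<exists>p :: 'n::finite ix \<Rightarrow> 'n. bij p"
proof -
  have "\<exists>p. bij_betw p (UNIV :: 'n ix set) (UNIV :: 'n set)"
    by (rule finite_same_card_bij) (auto simp: card_ix)
  then show ?thesis by auto
qed

lemma det_reindex:
  fixes L :: "real^'n::finite^'n" and p :: "'m::finite \<Rightarrow> 'n"
  assumes p: "bij p"
  shows "det (\<chi> i j. L $ p i $ p j) = det L"
proof -
  let ?M = "map_permutation (UNIV::'m set) p"
  let ?N = "map_permutation (UNIV::'n set) (inv p)"
  have bp: "bij_betw p UNIV UNIV" using p by (simp add: bij_betw_def bij_def)
  have bip: "bij_betw (inv p) UNIV UNIV" using bij_imp_bij_inv[OF p] by (simp add: bij_betw_def bij_def)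
  have inj: "inj_on p UNIV" using p bij_def by blast
  have app: "?M q (p i) = p (q i)" for q i
    using map_permutation_apply[OF inj] by simp
  have "det (\<chi> i j. L $ p i $ p j) = (\<Sum>q\<in>{q. q permutes (UNIV::'m set)}. of_int (sign q) * (\<Prod>i\<in>UNIV. L $ p i $ p (q i)))"
    unfolding det_def by simp
  also have "\<dots> = (\<Sum>q\<in>{q. q permutes (UNIV::'n set)}. of_int (sign q) * (\<Prod>i\<in>UNIV. L $ i $ q i))"
  proof (rule sum.reindex_bij_witness[where i = ?N and j = ?M])
    fix q :: "'m \<Rightarrow> 'm" assume "q \<in> {q. q permutes UNIV}"
    then have q: "q permutes UNIV" by simp
    show "?M q \<in> {q. q permutes UNIV}" using map_permutation_permutes[OF bp q] by simp
    show "?N (?M q) = q"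
      by (rule map_permutation_compose_inv[OF bp q]) (simp add: inv_f_f[OF inj])
    have "(\<Prod>i\<in>UNIV. L $ i $ ?M q i) = (\<Prod>i\<in>UNIV. L $ p i $ ?M q (p i))"
      by (rule prod.reindex_bij_betw[OF bp, symmetric])
    also have "\<dots> = (\<Prod>i\<in>UNIV. L $ p i $ p (q i))" by (simp add: app)
    finally show "of_int (sign (?M q)) * (\<Prod>i\<in>UNIV. L $ i $ ?M q i) =
        of_int (sign q) * (\<Prod>i\<in>UNIV. L $ p i $ p (q i))"
      using sign_map_permutation[OF inj q] by simp
  next
    fix q :: "'n \<Rightarrow> 'n" assume "q \<in> {q. q permutes UNIV}"
    then have q: "q permutes UNIV" by simp
    show "?N q \<in> {q. q permutes UNIV}" using map_permutation_permutes[OF bip q] by simp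
    show "?M (?N q) = q"
      by (rule map_permutation_compose_inv[OF bip q]) (simp add: surj_f_inv_f[OF bij_is_surj[OF p]])
  qed
  also have "\<dots> = det L" unfolding det_def by simp
  finally show ?thesis .
qed


lemma prod_Basis_vec:
  "(\<Prod>b\<in>(Basis :: (real^'n::finite) set). f b) = (\<Prod>i\<in>UNIV. f (axis i 1))"
proof -
  have B: "(Basis :: (real^'n) set) = range (\<lambda>i. axis i 1)"
    by (auto simp: Basis_vec_def)
  have "inj (\<lambda>i::'n. axis i (1::real))"
    by (auto intro!: injI simp: axis_eq_axis)
  then show ?thesis unfolding B by (simp add: prod.reindex)
qed

lemma emeasure_lborel_box_cart:
  fixes l u :: "real^'n::finite"
  assumes "\<And>i. l $ i \<le> u $ i"
  shows "emeasure lborel (box l u) = (\<Prod>i\<in>UNIV. u $ i - l $ i)"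
proof -
  have "\<And>b. b \<in> Basis \<Longrightarrow> l \<bullet> b \<le> u \<bullet> b"
    using assms by (auto simp: Basis_vec_def inner_axis)
  then have "emeasure lborel (box l u) = (\<Prod>b\<in>Basis. (u - l) \<bullet> b)"
    by (rule emeasure_lborel_box)
  also have "\<dots> = (\<Prod>i\<in>UNIV. u $ i - l $ i)"
    by (simp add: prod_Basis_vec inner_axis)
  finally show ?thesis .
qed

definition tr :: "('m::finite \<Rightarrow> 'n::finite) \<Rightarrow> real^'n \<Rightarrow> real^'m" where
  "tr p x = (\<chi> j. x $ p j)"

lemma linear_tr: "linear (tr p)"
  by (rule linearI) (simp_all add: tr_def vec_eq_iff)

lemma tr_measurable[measurable]: "tr p \<in> borel_measurable borel"
  by (intro borel_measurable_continuous_onI linear_continuous_on) (simp add: linear_conv_bounded_linear[symmetric] linear_tr)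

lemma tr_distr:
  fixes p :: "'m::finite \<Rightarrow> 'n::finite"
  assumes p: "bij p"
  shows "distr lborel borel (tr p) = lborel"
proof (rule lborel_eqI[symmetric])
  fix l u :: "real^'m"
  assume le: "\<And>b. b \<in> Basis \<Longrightarrow> l \<bullet> b \<le> u \<bullet> b"
  have lei: "l $ i \<le> u $ i" for i using le[of "axis i 1"] by (simp add: inner_axis)
  define l' u' where "l' = (\<chi> j. l $ inv p j)" and "u' = (\<chi> j. u $ inv p j)"
  have pre: "tr p -` box l u = box l' u'"
  proof -
    have "x \<in> tr p -` box l u \<longleftrightarrow> x \<in> box l' u'" for x
    proof -
      have "x \<in> tr p -` box l u \<longleftrightarrow> (\<forall>j. l $ j < x $ p j \<and> x $ p j < u $ j)"
        by (simp add: mem_box_cart tr_def)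
      also have "\<dots> \<longleftrightarrow> (\<forall>i. l $ inv p i < x $ i \<and> x $ i < u $ inv p i)"
        by (metis p bij_inv_eq_iff)
      finally show ?thesis by (simp add: mem_box_cart l'_def u'_def)
    qed
    then show ?thesis by blast
  qed
  have "emeasure (distr lborel borel (tr p)) (box l u) = emeasure lborel (box l' u')"
    by (simp add: emeasure_distr pre)
  also have "\<dots> = (\<Prod>i\<in>UNIV. u' $ i - l' $ i)"
    by (rule emeasure_lborel_box_cart) (simp add: l'_def u'_def lei)
  also have "\<dots> = (\<Prod>i\<in>UNIV. u $ inv p i - l $ inv p i)"
    by (simp add: l'_def u'_def)
  also have "\<dots> = (\<Prod>j\<in>UNIV. u $ j - l $ j)"
    using prod.reindex_bij_betw[of "inv p" UNIV UNIV "\<lambda>j. u $ j - l $ j"] bij_imp_bij_inv[OF p]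
    by (simp add: bij_betw_def bij_def)
  also have "\<dots> = (\<Prod>b\<in>Basis. (u - l) \<bullet> b)"
    by (simp add: prod_Basis_vec inner_axis)
  finally show "emeasure (distr lborel borel (tr p)) (box l u) = (\<Prod>b\<in>Basis. (u - l) \<bullet> b)" .
qed simp


lemma matvec_measurable[measurable]: "((*v) (L::real^'n::finite^'m::finite)) \<in> borel_measurable borel"
  by (intro borel_measurable_continuous_onI linear_continuous_on)
     (simp add: linear_conv_bounded_linear[symmetric])

lemma lborel_linear_wo:
  fixes L :: "real^('a::{finite,wellorder})^('a::{finite,wellorder})"
  assumes "invertible L"
  shows "lborel = density (distr lborel borel ((*v) L)) (\<lambda>_. ennreal \<bar>det L\<bar>)"
proof (rule lborel_eqI)
  obtain Li where Li: "L ** Li = mat 1" "Li ** L = mat 1"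
    using assms unfolding invertible_def by blast
  have dd: "\<bar>det L\<bar> * \<bar>det Li\<bar> = 1"
    using Li(1) by (metis abs_1 abs_mult det_I det_mul)
  fix l u :: "real^('a::{finite,wellorder})"
  assume le: "\<And>b. b \<in> Basis \<Longrightarrow> l \<bullet> b \<le> u \<bullet> b"
  have pre: "(*v) L -` box l u = (*v) Li ` box l u"
  proof (intro set_eqI iffI)
    fix x assume "x \<in> (*v) L -` box l u"
    then have "L *v x \<in> box l u" by simp
    moreover have "Li *v (L *v x) = x" by (simp add: matrix_vector_mul_assoc Li)
    ultimately show "x \<in> (*v) Li ` box l u" by (metis image_eqI)
  next
    fix x assume "x \<in> (*v) Li ` box l u"
    then obtain y where "y \<in> box l u" "x = Li *v y" by blast
    moreover have "L *v (Li *v y) = y" by (simp add: matrix_vector_mul_assoc Li)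
    ultimately show "x \<in> (*v) L -` box l u" by simp
  qed
  have lin: "linear ((*v) Li)" by simp
  have bl: "box l u \<in> lmeasurable" by simp
  have m1: "(*v) Li ` box l u \<in> lmeasurable"
    by (rule measurable_linear_image[OF lin bl])
  have m2: "measure lebesgue ((*v) Li ` box l u) = \<bar>det Li\<bar> * measure lebesgue (box l u)"
    using measure_linear_image[OF lin bl] by simp
  have sb: "(*v) Li ` box l u \<in> sets borel"
    unfolding pre[symmetric] using measurable_sets_borel[OF matvec_measurable[of L], of "box l u"] by simp
  have "emeasure lborel ((*v) Li ` box l u) = emeasure lebesgue ((*v) Li ` box l u)"
    using sb by simp
  also have "\<dots> = ennreal (measure lebesgue ((*v) Li ` box l u))"
    using m1 by (simp add: emeasure_eq_measure2)
  finally have e1: "emeasure lborel ((*v) Li ` box l u) = ennreal (\<bar>det Li\<bar> * measure lebesgue (box l u))"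
    using m2 by simp
  have e2: "emeasure lborel (box l u) = ennreal (measure lebesgue (box l u))"
    using bl by (simp add: emeasure_eq_measure2)
  have "emeasure (density (distr lborel borel ((*v) L)) (\<lambda>_. ennreal \<bar>det L\<bar>)) (box l u)
        = ennreal \<bar>det L\<bar> * emeasure lborel ((*v) L -` box l u)"
    by (simp add: emeasure_density_const emeasure_distr)
  also have "\<dots> = ennreal (\<bar>det L\<bar> * (\<bar>det Li\<bar> * measure lebesgue (box l u)))"
    using e1 pre by (simp add: ennreal_mult)
  also have "\<dots> = emeasure lborel (box l u)"
    using e2 dd by (simp add: mult.assoc[symmetric])
  also have "\<dots> = (\<Prod>b\<in>Basis. (u - l) \<bullet> b)"
    using le by (rule emeasure_lborel_box)
  finally show "emeasure (density (distr lborel borel ((*v) L)) (\<lambda>_. ennreal \<bar>det L\<bar>)) (box l u) = (\<Prod>b\<in>Basis. (u - l) \<bullet> b)" .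
qed simp


lemma lborel_linear:
  fixes L :: "real^'n::finite^'n"
  assumes L: "invertible L"
  shows "lborel = density (distr lborel borel ((*v) L)) (\<lambda>_. ennreal \<bar>det L\<bar>)"
proof -
  obtain p :: "'n ix \<Rightarrow> 'n" where p: "bij p" using ex_bij_ix by blast
  define L' where "L' = (\<chi> i j. L $ p i $ p j)"
  define T where "T = (tr (inv p) :: real^'n ix \<Rightarrow> real^'n)"
  have dL': "det L' = det L" unfolding L'_def by (rule det_reindex[OF p])
  have iL': "invertible L'" using L dL' by (simp add: invertible_det_nz)
  have bip: "bij (inv p)" using p by (rule bij_imp_bij_inv)
  have comm: "(*v) L \<circ> T = T \<circ> (*v) L'"
  proof
    fix y :: "real^'n ix"
    have "(L *v T y) $ j = (T (L' *v y)) $ j" for j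
    proof -
      have "(T (L' *v y)) $ j = (\<Sum>i\<in>UNIV. L $ j $ p i * y $ i)"
        by (simp add: T_def tr_def L'_def matrix_vector_mult_def surj_f_inv_f[OF bij_is_surj[OF p]])
      also have "\<dots> = (\<Sum>k\<in>UNIV. L $ j $ k * y $ inv p k)"
        using sum.reindex_bij_betw[of p UNIV UNIV "\<lambda>k. L $ j $ k * y $ inv p k"] p
        by (simp add: bij_betw_def bij_def inv_f_f)
      also have "\<dots> = (L *v T y) $ j"
        by (simp add: T_def tr_def matrix_vector_mult_def)
      finally show ?thesis by simp
    qed
    then show "((*v) L \<circ> T) y = (T \<circ> (*v) L') y" by (simp add: vec_eq_iff)
  qed
  have Tm[measurable]: "T \<in> borel_measurable borel" unfolding T_def by simp
  have lbn: "(lborel :: (real^'n) measure) = distr lborel borel T"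
    unfolding T_def using tr_distr[OF bip] by simp
  have "density (distr lborel borel ((*v) L)) (\<lambda>_. ennreal \<bar>det L\<bar>)
      = density (distr (distr lborel borel T) borel ((*v) L)) (\<lambda>_. ennreal \<bar>det L\<bar>)"
    by (simp add: lbn[symmetric])
  also have "distr (distr lborel borel T) borel ((*v) L) = distr lborel borel ((*v) L \<circ> T)"
    by (simp add: distr_distr)
  also have "\<dots> = distr lborel borel (T \<circ> (*v) L')" by (simp add: comm)
  also have "\<dots> = distr (distr lborel borel ((*v) L')) borel T"
    by (simp add: distr_distr)
  also have "density (distr (distr lborel borel ((*v) L')) borel T) (\<lambda>_. ennreal \<bar>det L\<bar>)
      = distr (density (distr lborel borel ((*v) L')) (\<lambda>_. ennreal \<bar>det L\<bar>)) borel T"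
    by (subst density_distr) (auto simp: cong: distr_cong)
  also have "density (distr lborel borel ((*v) L')) (\<lambda>_. ennreal \<bar>det L\<bar>) = lborel"
    using lborel_linear_wo[OF iL'] dL' by simp
  finally show ?thesis using lbn by simp
qed

lemma nn_integral_linear:
  fixes L :: "real^'n::finite^'n" and F :: "real^'n \<Rightarrow> ennreal"
  assumes L: "invertible L" and F[measurable]: "F \<in> borel_measurable borel"
  shows "(\<integral>\<^sup>+x. F x \<partial>lborel) = ennreal \<bar>det L\<bar> * (\<integral>\<^sup>+x. F (L *v x) \<partial>lborel)"
proof -
  have "(\<integral>\<^sup>+x. F x \<partial>lborel) = (\<integral>\<^sup>+x. F x \<partial>density (distr lborel borel ((*v) L)) (\<lambda>_. ennreal \<bar>det L\<bar>))"
    using lborel_linear[OF L] by simp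
  also have "\<dots> = (\<integral>\<^sup>+x. ennreal \<bar>det L\<bar> * F x \<partial>distr lborel borel ((*v) L))"
    by (simp add: nn_integral_density)
  also have "\<dots> = (\<integral>\<^sup>+x. ennreal \<bar>det L\<bar> * F (L *v x) \<partial>lborel)"
    by (simp add: nn_integral_distr)
  also have "\<dots> = ennreal \<bar>det L\<bar> * (\<integral>\<^sup>+x. F (L *v x) \<partial>lborel)"
    by (simp add: nn_integral_cmult)
  finally show ?thesis .
qed

lemma outer_mult: "(outer u v :: real^'n::finite^'n) ** outer x y = (v \<bullet> x) *\<^sub>R outer u y"
  unfolding outer_def matrix_matrix_mult_def vec_eq_iff inner_vec_def
  by (auto simp: sum_distrib_left sum_distrib_right mult_ac)


lemma transpose_outer: "transpose (outer u v :: real^'n::finite^'n) = outer v u"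
  by (simp add: outer_def transpose_def vec_eq_iff)

lemma outer_sandwich:
  "transpose M ** (outer u v :: real^'n::finite^'n) ** N = outer (transpose M *v u) (transpose N *v v)"
proof -
  have "(transpose M ** outer u v ** N) $ i $ j = outer (transpose M *v u) (transpose N *v v) $ i $ j" for i j
  proof -
    have "(transpose M ** outer u v ** N) $ i $ j = (\<Sum>l\<in>UNIV. (\<Sum>k\<in>UNIV. M $ k $ i * u $ k * v $ l) * N $ l $ j)"
      unfolding matrix_matrix_mult_def outer_def transpose_def by (simp add: mult.assoc)
    also have "\<dots> = (\<Sum>k\<in>UNIV. M $ k $ i * u $ k) * (\<Sum>l\<in>UNIV. N $ l $ j * v $ l)"
      by (simp add: sum_distrib_left sum_distrib_right mult_ac)
    also have "\<dots> = outer (transpose M *v u) (transpose N *v v) $ i $ j"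
      unfolding outer_def matrix_vector_mult_def transpose_def by simp
    finally show ?thesis .
  qed
  then show ?thesis by (simp add: vec_eq_iff)
qed

lemma mm_add_rdistrib: "((B + C) ** A) = (B ** A) + (C ** (A::real^'n::finite^'n))"
  by (vector matrix_matrix_mult_def sum.distrib[symmetric] field_simps)

lemma mm_scaleR_left: "(k *\<^sub>R A) ** B = k *\<^sub>R (A ** (B::real^'n::finite^'n))"
  by (simp add: matrix_matrix_mult_def sum_distrib_left mult_ac vec_eq_iff scaleR_sum_right)

lemma mm_scaleR_right: "A ** (k *\<^sub>R B) = k *\<^sub>R (A ** (B::real^'n::finite^'n))"
  by (simp add: matrix_matrix_mult_def sum_distrib_left mult_ac vec_eq_iff scaleR_sum_right)

lemma rank1_mult:
  "(mat 1 + x *\<^sub>R outer b b :: real^'n::finite^'n) ** (mat 1 + y *\<^sub>R outer b b)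
   = mat 1 + (x + y + x * y * (b \<bullet> b)) *\<^sub>R outer b b"
proof -
  have "(mat 1 + x *\<^sub>R outer b b :: real^'n^'n) ** (mat 1 + y *\<^sub>R outer b b)
     = mat 1 + y *\<^sub>R outer b b + x *\<^sub>R outer b b + (x * y) *\<^sub>R (outer b b ** outer b b)"
    by (simp add: matrix_add_ldistrib mm_add_rdistrib mm_scaleR_left mm_scaleR_right algebra_simps)
  also have "\<dots> = mat 1 + (x + y + x * y * (b \<bullet> b)) *\<^sub>R outer b b"
    by (simp add: outer_mult scaleR_add_left)
  finally show ?thesis .
qed


lemma rank1_update:
  fixes R :: "real^'n::finite^'n" and a :: "real^'n"
  assumes R: "invertible R" and c: "c \<ge> 0"
  shows "\<exists>R'::real^'n^'n. invertible R' \<and> transpose R' ** R' = transpose R ** R + c *\<^sub>R outer a a"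
proof -
  obtain Ri where Ri: "R ** Ri = mat 1" "Ri ** R = mat 1"
    using R unfolding invertible_def by blast
  define b where "b = transpose Ri *v a"
  have Rb: "transpose R *v b = a"
    unfolding b_def matrix_vector_mul_assoc matrix_transpose_mul[symmetric] Ri by simp
  show ?thesis
  proof (cases "b \<bullet> b = 0")
    case True
    then have "b = 0" by simp
    then have "a = 0" using Rb by simp
    then have "outer a a = (0::real^'n^'n)" by (simp add: outer_def vec_eq_iff)
    then show ?thesis using R by (intro exI[of _ R]) simp
  next
    case False
    define n2 where "n2 = b \<bullet> b"
    have n2: "n2 > 0" using False unfolding n2_def by (simp add: order_le_less)
    define s where "s = sqrt (1 + c * n2)"
    have s1: "s \<ge> 1" unfolding s_def using c n2 by simp
    have ss: "s * s = 1 + c * n2" unfolding s_def using c n2 by simp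
    define \<beta> where "\<beta> = (s - 1) / n2"
    define \<gamma> where "\<gamma> = \<beta> / s"
    define S where "S = mat 1 + \<beta> *\<^sub>R outer b b"
    define Si where "Si = mat 1 + (- \<gamma>) *\<^sub>R outer b b"
    have bn: "\<beta> * n2 = s - 1" unfolding \<beta>_def using n2 by simp
    have e1: "\<beta> + \<beta> + \<beta> * \<beta> * (b \<bullet> b) = c"
    proof -
      have "(\<beta> + \<beta> + \<beta> * \<beta> * n2) * n2 = 2 * (\<beta> * n2) + (\<beta> * n2) * (\<beta> * n2)"
        by (simp add: algebra_simps)
      also have "\<dots> = 2 * (s - 1) + (s - 1) * (s - 1)" using bn by simp
      also have "\<dots> = s * s - 1" by (simp add: algebra_simps)
      also have "\<dots> = c * n2" using ss by simp
      finally have "(\<beta> + \<beta> + \<beta> * \<beta> * n2) * n2 = c * n2" .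
      then show ?thesis using n2 unfolding n2_def by simp
    qed
    have e2: "\<beta> + - \<gamma> + \<beta> * - \<gamma> * (b \<bullet> b) = 0"
    proof -
      have "\<gamma> * s = \<beta>" unfolding \<gamma>_def using s1 by simp
      have "\<beta> - \<gamma> - \<gamma> * (\<beta> * n2) = \<beta> - \<gamma> * (1 + \<beta> * n2)" by (simp add: algebra_simps)
      also have "\<dots> = \<beta> - \<gamma> * s" using bn by simp
      also have "\<dots> = 0" using \<open>\<gamma> * s = \<beta>\<close> by simp
      finally have "\<beta> - \<gamma> - \<gamma> * (\<beta> * n2) = 0" .
      then show ?thesis unfolding n2_def by (simp add: algebra_simps)
    qed
    have e3: "- \<gamma> + \<beta> + - \<gamma> * \<beta> * (b \<bullet> b) = 0" using e2 by (simp add: algebra_simps)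
    have SS: "S ** S = mat 1 + c *\<^sub>R outer b b"
      unfolding S_def rank1_mult e1 ..
    have SSi: "S ** Si = mat 1" unfolding S_def Si_def rank1_mult e2 by simp
    have SiS: "Si ** S = mat 1" unfolding S_def Si_def rank1_mult e3 by simp
    have St: "transpose S = S"
      unfolding S_def by (simp add: transpose_def vec_eq_iff outer_def mat_def mult.commute)
    have iS: "invertible S" unfolding invertible_def using SSi SiS by blast
    have iSR: "invertible (S ** R)" using iS R by (rule invertible_mult)
    have "transpose (S ** R) ** (S ** R) = transpose R ** (S ** S) ** R"
      by (simp add: matrix_transpose_mul St matrix_mul_assoc)
    also have "\<dots> = transpose R ** R + c *\<^sub>R (transpose R ** outer b b ** R)"
      by (simp add: SS matrix_add_ldistrib mm_add_rdistrib mm_scaleR_left mm_scaleR_right)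
    also have "transpose R ** outer b b ** R = outer a a"
      by (simp only: outer_sandwich Rb)
    finally have "transpose (S ** R) ** (S ** R) = transpose R ** R + c *\<^sub>R outer a a" .
    then show ?thesis using iSR by (intro exI[of _ "S ** R"] conjI)
  qed
qed

lemma sqrt_decomp:
  fixes a :: "nat \<Rightarrow> real^'n::finite" and c :: "nat \<Rightarrow> real"
  assumes "\<And>k. k < K \<Longrightarrow> c k \<ge> 0"
  shows "\<exists>R::real^'n^'n. invertible R \<and> transpose R ** R = mat 1 + (\<Sum>k<K. c k *\<^sub>R outer (a k) (a k))"
  using assms
proof (induction K)
  case 0
  have "invertible (mat 1 :: real^'n^'n)" unfolding invertible_def by auto
  then show ?case by (intro exI[of _ "mat 1"]) simp
next
  case (Suc K)
  have "\<exists>R::real^'n^'n. invertible R \<and> transpose R ** R = mat 1 + (\<Sum>k<K. c k *\<^sub>R outer (a k) (a k))"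
    using Suc.IH Suc.prems by simp
  then obtain R :: "real^'n^'n" where R: "invertible R" "transpose R ** R = mat 1 + (\<Sum>k<K. c k *\<^sub>R outer (a k) (a k))"
    by blast
  obtain R' :: "real^'n^'n" where R': "invertible R'" "transpose R' ** R' = transpose R ** R + c K *\<^sub>R outer (a K) (a K)"
    using rank1_update[OF R(1), of "c K" "a K"] Suc.prems[of K] by auto
  show ?case using R' R(2) by (intro exI[of _ R']) (simp add: add.assoc)
qed

definition phi :: "real \<Rightarrow> real" where "phi x = exp x - 1 - x"

lemma phi_nonneg: "phi x \<ge> 0"
  unfolding phi_def using exp_ge_add_one_self[of x] by linarith

lemma phi_bounds:
  assumes "\<bar>x\<bar> \<le> 1"
  shows "x\<^sup>2 / (2 * exp 1) \<le> phi x" "phi x \<le> exp 1 / 2 * x\<^sup>2"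
proof -
  obtain t where t: "\<bar>t\<bar> \<le> \<bar>x\<bar>" "exp x = (\<Sum>m<2. (x ^ m) / fact m) + (exp t / fact 2) * x ^ 2"
    using Maclaurin_exp_le[of x 2] by blast
  have p: "phi x = exp t / 2 * x\<^sup>2" using t(2) by (simp add: phi_def numeral_2_eq_2)
  have t1: "-1 \<le> t" "t \<le> 1" using t(1) assms by auto
  have "exp (-1) \<le> exp t" "exp t \<le> exp 1" using t1 by auto
  moreover have "exp (-1) = 1 / exp (1::real)" by (metis exp_minus inverse_eq_divide)
  ultimately have e1: "1 / exp 1 \<le> exp t" and e2: "exp t \<le> exp 1" by auto
  have "x\<^sup>2 / (2 * exp 1) = (1 / exp 1) / 2 * x\<^sup>2" by simp
  also have "\<dots> \<le> exp t / 2 * x\<^sup>2"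
    by (intro mult_right_mono divide_right_mono e1) auto
  finally show "x\<^sup>2 / (2 * exp 1) \<le> phi x" unfolding p .
  show "phi x \<le> exp 1 / 2 * x\<^sup>2" unfolding p
    by (intro mult_right_mono divide_right_mono e2) auto
qed

lemma phi_scale:
  assumes "0 \<le> t" "t \<le> 1"
  shows "phi (t * x) \<le> t * phi x"
proof -
  have "exp ((1 - t) * 0 + t * x) \<le> (1 - t) * exp 0 + t * exp x"
    using convex_onD[OF exp_convex, of t 0 x] assms by simp
  then show ?thesis unfolding phi_def by (simp add: algebra_simps)
qed


definition gfun :: "nat \<Rightarrow> (nat \<Rightarrow> real^'n::finite) \<Rightarrow> (nat \<Rightarrow> real) \<Rightarrow> real^'n \<Rightarrow> real" where
  "gfun K a c \<theta> = -(\<Sum>k<K. c k * phi (a k \<bullet> \<theta>)) - 1/2 * (\<theta> \<bullet> \<theta>)"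

definition qf :: "nat \<Rightarrow> (nat \<Rightarrow> real^'n::finite) \<Rightarrow> (nat \<Rightarrow> real) \<Rightarrow> real^'n \<Rightarrow> real" where
  "qf K a c \<theta> = \<theta> \<bullet> \<theta> + (\<Sum>k<K. c k * (a k \<bullet> \<theta>)\<^sup>2)"

lemma qf_ge: assumes "\<And>k. k < K \<Longrightarrow> c k \<ge> 0" shows "\<theta> \<bullet> \<theta> \<le> qf K a c \<theta>"
  unfolding qf_def using assms by (auto intro!: sum_nonneg)

lemma qf_scale: "qf K a c (t *\<^sub>R \<theta>) = t\<^sup>2 * qf K a c \<theta>"
  unfolding qf_def by (simp add: sum_distrib_left power_mult_distrib power2_eq_square algebra_simps)

lemma g_lower:
  assumes c: "\<And>k. k < K \<Longrightarrow> c k \<ge> 0" and small: "\<And>k. k < K \<Longrightarrow> \<bar>a k \<bullet> \<theta>\<bar> \<le> 1"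
  shows "gfun K a c \<theta> \<ge> - (exp 1 / 2) * qf K a c \<theta>"
proof -
  have "(\<Sum>k<K. c k * phi (a k \<bullet> \<theta>)) \<le> (\<Sum>k<K. exp 1 / 2 * (c k * (a k \<bullet> \<theta>)\<^sup>2))"
  proof (rule sum_mono)
    fix k assume "k \<in> {..<K}"
    then have "c k * phi (a k \<bullet> \<theta>) \<le> c k * (exp 1 / 2 * (a k \<bullet> \<theta>)\<^sup>2)"
      using c small phi_bounds(2) by (intro mult_left_mono) auto
    then show "c k * phi (a k \<bullet> \<theta>) \<le> exp 1 / 2 * (c k * (a k \<bullet> \<theta>)\<^sup>2)" by (simp add: algebra_simps)
  qed
  moreover have "1/2 * (\<theta> \<bullet> \<theta>) \<le> exp 1 / 2 * (\<theta> \<bullet> \<theta>)"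
    using exp_ge_add_one_self[of 1] by (intro mult_right_mono) auto
  moreover have "(\<Sum>k<K. exp 1 / 2 * (c k * (a k \<bullet> \<theta>)\<^sup>2)) = exp 1 / 2 * (\<Sum>k<K. c k * (a k \<bullet> \<theta>)\<^sup>2)"
    by (simp add: sum_distrib_left)
  ultimately show ?thesis unfolding gfun_def qf_def by (simp add: algebra_simps)
qed

lemma g_upper_small:
  assumes c: "\<And>k. k < K \<Longrightarrow> c k \<ge> 0" and small: "\<And>k. k < K \<Longrightarrow> \<bar>a k \<bullet> \<theta>\<bar> \<le> 1"
  shows "gfun K a c \<theta> \<le> - qf K a c \<theta> / (2 * exp 1)"
proof -
  have "(\<Sum>k<K. c k * (a k \<bullet> \<theta>)\<^sup>2 / (2 * exp 1)) \<le> (\<Sum>k<K. c k * phi (a k \<bullet> \<theta>))"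
  proof (rule sum_mono)
    fix k assume "k \<in> {..<K}"
    then have "c k * ((a k \<bullet> \<theta>)\<^sup>2 / (2 * exp 1)) \<le> c k * phi (a k \<bullet> \<theta>)"
      using c small phi_bounds(1) by (intro mult_left_mono) auto
    then show "c k * (a k \<bullet> \<theta>)\<^sup>2 / (2 * exp 1) \<le> c k * phi (a k \<bullet> \<theta>)" by simp
  qed
  moreover have "(\<theta> \<bullet> \<theta>) / (2 * exp 1) \<le> 1/2 * (\<theta> \<bullet> \<theta>)"
  proof -
    have "(\<theta> \<bullet> \<theta>) / (2 * exp 1) = (1 / exp 1) * (1/2 * (\<theta> \<bullet> \<theta>))" by simp
    also have "\<dots> \<le> 1 * (1/2 * (\<theta> \<bullet> \<theta>))"
      using exp_ge_add_one_self[of 1] by (intro mult_right_mono) auto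
    finally show ?thesis by simp
  qed
  moreover have "qf K a c \<theta> / (2 * exp 1) = (\<theta> \<bullet> \<theta>) / (2 * exp 1) + (\<Sum>k<K. c k * (a k \<bullet> \<theta>)\<^sup>2 / (2 * exp 1))"
    unfolding qf_def by (simp add: add_divide_distrib sum_divide_distrib)
  ultimately show ?thesis unfolding gfun_def by linarith
qed

lemma g_scale:
  assumes c: "\<And>k. k < K \<Longrightarrow> c k \<ge> 0" and t: "0 \<le> t" "t \<le> 1"
  shows "gfun K a c (t *\<^sub>R \<theta>) \<ge> t * gfun K a c \<theta>"
proof -
  have "(\<Sum>k<K. c k * phi (a k \<bullet> (t *\<^sub>R \<theta>))) \<le> (\<Sum>k<K. t * (c k * phi (a k \<bullet> \<theta>)))"
  proof (rule sum_mono)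
    fix k assume "k \<in> {..<K}"
    then have "c k * phi (t * (a k \<bullet> \<theta>)) \<le> c k * (t * phi (a k \<bullet> \<theta>))"
      using c phi_scale[OF t] by (intro mult_left_mono) auto
    then show "c k * phi (a k \<bullet> (t *\<^sub>R \<theta>)) \<le> t * (c k * phi (a k \<bullet> \<theta>))" by (simp add: algebra_simps)
  qed
  moreover have "1/2 * ((t *\<^sub>R \<theta>) \<bullet> (t *\<^sub>R \<theta>)) \<le> t * (1/2 * (\<theta> \<bullet> \<theta>))"
  proof -
    have "t * t \<le> t * 1" using t by (intro mult_left_mono) auto
    then have "(t * t) * (1/2 * (\<theta> \<bullet> \<theta>)) \<le> t * (1/2 * (\<theta> \<bullet> \<theta>))"
      by (intro mult_right_mono) auto
    then show ?thesis by (simp add: algebra_simps)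
  qed
  ultimately show ?thesis unfolding gfun_def by (simp add: sum_distrib_left[symmetric] algebra_simps)
qed


lemma qf_nonneg: assumes "\<And>k. k < K \<Longrightarrow> c k \<ge> 0" shows "qf K a c \<theta> \<ge> 0"
  using qf_ge[OF assms, where \<theta>=\<theta> and a=a] by (meson inner_ge_zero order_trans)

lemma small_of:
  assumes c: "\<And>k. k < K \<Longrightarrow> c k \<ge> 0" and ar: "\<And>k. k < K \<Longrightarrow> norm (a k) * r \<le> 1"
    and q: "sqrt (qf K a c \<theta>) \<le> r" and k: "k < K"
  shows "\<bar>a k \<bullet> \<theta>\<bar> \<le> 1"
proof -
  have "norm \<theta> = sqrt (\<theta> \<bullet> \<theta>)" by (simp add: norm_eq_sqrt_inner)
  also have "\<dots> \<le> sqrt (qf K a c \<theta>)" using qf_ge[OF c] by simp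
  finally have n: "norm \<theta> \<le> r" using q by simp
  have "\<bar>a k \<bullet> \<theta>\<bar> \<le> norm (a k) * norm \<theta>" by (rule Cauchy_Schwarz_ineq2)
  also have "\<dots> \<le> norm (a k) * r" using n by (intro mult_left_mono) auto
  also have "\<dots> \<le> 1" using ar k by simp
  finally show ?thesis .
qed

lemma g_lower_ball:
  assumes c: "\<And>k. k < K \<Longrightarrow> c k \<ge> 0" and ar: "\<And>k. k < K \<Longrightarrow> norm (a k) * r \<le> 1"
    and q: "sqrt (qf K a c \<theta>) \<le> r"
  shows "gfun K a c \<theta> \<ge> - (exp 1 / 2) * r\<^sup>2"
proof -
  have q0: "qf K a c \<theta> \<ge> 0" by (rule qf_nonneg[OF c])
  have "qf K a c \<theta> \<le> r\<^sup>2"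
    using q q0 by (metis real_sqrt_le_iff real_sqrt_pow2 power2_le_imp_le real_sqrt_ge_zero sqrt_le_D)
  then have "- (exp 1 / 2) * r\<^sup>2 \<le> - (exp 1 / 2) * qf K a c \<theta>" by simp
  also have "\<dots> \<le> gfun K a c \<theta>"
    by (rule g_lower[OF c small_of[OF c ar q]])
  finally show ?thesis .
qed

lemma g_upper:
  assumes c: "\<And>k. k < K \<Longrightarrow> c k \<ge> 0" and r: "r > 0" and ar: "\<And>k. k < K \<Longrightarrow> norm (a k) * r \<le> 1"
  shows "gfun K a c \<theta> \<le> - (r * sqrt (qf K a c \<theta>) - r\<^sup>2) / (2 * exp 1)"
proof -
  define q where "q = sqrt (qf K a c \<theta>)"
  have q0: "qf K a c \<theta> \<ge> 0" by (rule qf_nonneg[OF c])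
  have qq: "q\<^sup>2 = qf K a c \<theta>" unfolding q_def using q0 by simp
  have e: "exp (1::real) > 0" by simp
  show ?thesis
  proof (cases "q \<le> r")
    case True
    have "gfun K a c \<theta> \<le> - qf K a c \<theta> / (2 * exp 1)"
      by (rule g_upper_small[OF c small_of[OF c ar True[unfolded q_def]]])
    also have "\<dots> \<le> - (r * q - r\<^sup>2) / (2 * exp 1)"
    proof -
      have "r * q - r\<^sup>2 \<le> qf K a c \<theta>"
        using True r q0 by (simp add: power2_eq_square) (metis mult_left_mono less_le order_trans diff_le_0_iff_le)
      then show ?thesis by (intro divide_right_mono) auto
    qed
    finally show ?thesis unfolding q_def .
  next
    case False
    then have qr: "q > r" by simp
    define t where "t = r / q"
    have t: "0 \<le> t" "t \<le> 1" "t > 0" unfolding t_def using qr r by auto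
    have "qf K a c (t *\<^sub>R \<theta>) = r\<^sup>2"
      unfolding qf_scale qq[symmetric] t_def using qr r by (simp add: power_divide)
    then have sq: "sqrt (qf K a c (t *\<^sub>R \<theta>)) \<le> r" using r by simp
    have "t * gfun K a c \<theta> \<le> gfun K a c (t *\<^sub>R \<theta>)" by (rule g_scale[OF c t(1,2)])
    also have "\<dots> \<le> - qf K a c (t *\<^sub>R \<theta>) / (2 * exp 1)"
      by (rule g_upper_small[OF c small_of[OF c ar sq]])
    also have "\<dots> = - r\<^sup>2 / (2 * exp 1)" using \<open>qf K a c (t *\<^sub>R \<theta>) = r\<^sup>2\<close> by simp
    finally have h: "t * gfun K a c \<theta> \<le> - r\<^sup>2 / (2 * exp 1)" .
    have "gfun K a c \<theta> \<le> - r\<^sup>2 / (2 * exp 1) / t"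
      using h t(3) by (simp add: field_simps)
    also have "\<dots> = - (r * q) / (2 * exp 1)"
      unfolding t_def using r qr by (simp add: field_simps power2_eq_square)
    also have "\<dots> \<le> - (r * q - r\<^sup>2) / (2 * exp 1)"
      by (intro divide_right_mono) auto
    finally show ?thesis unfolding q_def .
  qed
qed


lemma outer_mv: "(outer u v :: real^'n::finite^'n) *v x = (v \<bullet> x) *\<^sub>R u"
  by (simp add: outer_def matrix_vector_mult_def vec_eq_iff inner_vec_def sum_distrib_left mult_ac)

lemma scaleR_mv: "(t *\<^sub>R (A :: real^'n::finite^'m::finite)) *v x = t *\<^sub>R (A *v x)"
  by (simp add: matrix_vector_mult_def vec_eq_iff sum_distrib_left mult_ac)

lemma sum_mv: "(\<Sum>k<(K::nat). (A k :: real^'n::finite^'m::finite)) *v x = (\<Sum>k<K. A k *v x)"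
  by (induction K) (simp_all add: matrix_vector_mult_add_rdistrib)

lemma quad_form:
  fixes R :: "real^'n::finite^'n"
  assumes "transpose R ** R = mat 1 + (\<Sum>k<K. c k *\<^sub>R outer (a k) (a k))"
  shows "(R *v x) \<bullet> (R *v x) = qf K a c x"
proof -
  have "(R *v x) \<bullet> (R *v x) = x \<bullet> ((transpose R ** R) *v x)"
    by (metis dot_lmul_matrix matrix_vector_mul_assoc vector_transpose_matrix)
  also have "(transpose R ** R) *v x = x + (\<Sum>k<K. (c k * (a k \<bullet> x)) *\<^sub>R a k)"
    unfolding assms by (simp add: matrix_vector_mult_add_rdistrib sum_mv scaleR_mv outer_mv)
  also have "x \<bullet> \<dots> = qf K a c x"
    unfolding qf_def by (simp add: inner_add_right inner_sum_right power2_eq_square inner_commute mult_ac)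
  finally show ?thesis .
qed

lemma norm_R:
  fixes R :: "real^'n::finite^'n"
  assumes "transpose R ** R = mat 1 + (\<Sum>k<K. c k *\<^sub>R outer (a k) (a k))"
  shows "norm (R *v x) = sqrt (qf K a c x)"
  using quad_form[OF assms] by (simp add: norm_eq_sqrt_inner)


lemma grad_zero:
  fixes \<alpha> :: "nat \<Rightarrow> real^'n::finite"
  assumes max: "\<forall>\<theta>. logdens K \<alpha> \<omega> \<eta> \<theta> \<le> logdens K \<alpha> \<omega> \<eta> \<theta>h"
  shows "\<eta> = \<theta>h + (\<Sum>k<K. (\<omega> k * exp (\<alpha> k \<bullet> \<theta>h)) *\<^sub>R \<alpha> k)"
proof -
  define w where "w = \<eta> - \<theta>h - (\<Sum>k<K. (\<omega> k * exp (\<alpha> k \<bullet> \<theta>h)) *\<^sub>R \<alpha> k)"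
  define \<psi> where "\<psi> = (\<lambda>t::real. -(\<Sum>k<K. \<omega> k * exp (\<alpha> k \<bullet> \<theta>h + t * (\<alpha> k \<bullet> w)))
      + (\<eta> \<bullet> \<theta>h + t * (\<eta> \<bullet> w)) - 1/2 * (\<theta>h \<bullet> \<theta>h + 2 * t * (\<theta>h \<bullet> w) + t\<^sup>2 * (w \<bullet> w)))"
  have eq: "logdens K \<alpha> \<omega> \<eta> (\<theta>h + t *\<^sub>R w) = \<psi> t" for t
    unfolding logdens_def \<psi>_def
    by (simp add: inner_add_right inner_add_left inner_commute power2_eq_square algebra_simps)
  define S where "S = (\<Sum>k<K. exp (\<alpha> k \<bullet> \<theta>h) * (\<alpha> k \<bullet> w) * \<omega> k)"
  have D: "(\<psi> has_real_derivative (- S + \<eta> \<bullet> w - \<theta>h \<bullet> w)) (at 0)"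
    unfolding \<psi>_def S_def by (rule derivative_eq_intros refl | simp)+
  have "- S + \<eta> \<bullet> w - \<theta>h \<bullet> w = 0"
  proof (rule DERIV_local_max[OF D, of 1])
    show "\<forall>y. \<bar>0 - y\<bar> < 1 \<longrightarrow> \<psi> y \<le> \<psi> 0"
      using max eq by (metis add.right_neutral scaleR_zero_left)
  qed simp
  moreover have "w \<bullet> w = \<eta> \<bullet> w - \<theta>h \<bullet> w - S"
    unfolding S_def by (subst (1) w_def) (simp add: inner_diff_left inner_sum_left mult_ac)
  ultimately have "w \<bullet> w = 0" by simp
  then have "w = 0" by simp
  then show ?thesis unfolding w_def by (simp add: algebra_simps)
qed


lemma decomp:
  fixes \<alpha> :: "nat \<Rightarrow> real^'n::finite"
  assumes grad: "\<eta> = \<theta>h + (\<Sum>k<K. (\<omega> k * exp (\<alpha> k \<bullet> \<theta>h)) *\<^sub>R \<alpha> k)"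
  shows "logdens K \<alpha> \<omega> \<eta> (\<theta>h + \<theta>) = logdens K \<alpha> \<omega> \<eta> \<theta>h + gfun K \<alpha> (\<lambda>k. \<omega> k * exp (\<alpha> k \<bullet> \<theta>h)) \<theta>"
proof -
  define C where "C = (\<Sum>k<K. \<omega> k * exp (\<alpha> k \<bullet> \<theta>h))"
  define E where "E = (\<Sum>k<K. \<omega> k * exp (\<alpha> k \<bullet> \<theta>h) * exp (\<alpha> k \<bullet> \<theta>))"
  define L where "L = (\<Sum>k<K. \<omega> k * exp (\<alpha> k \<bullet> \<theta>h) * (\<alpha> k \<bullet> \<theta>))"
  have e1: "\<eta> \<bullet> \<theta> = \<theta>h \<bullet> \<theta> + L"
    unfolding L_def by (simp add: grad inner_add_left inner_sum_left)
  have e2: "(\<Sum>k<K. \<omega> k * exp (\<alpha> k \<bullet> (\<theta>h + \<theta>))) = E"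
    unfolding E_def by (simp add: inner_add_right exp_add mult.assoc)
  have e3: "(\<Sum>k<K. \<omega> k * exp (\<alpha> k \<bullet> \<theta>h) * phi (\<alpha> k \<bullet> \<theta>)) = E - C - L"
    unfolding E_def C_def L_def phi_def by (simp add: sum_subtractf right_diff_distrib)
  show ?thesis
    unfolding logdens_def gfun_def e2 e3 C_def[symmetric]
    by (simp add: inner_add_right inner_add_left e1 inner_commute algebra_simps)
qed


lemma exp_abs_finite_1d:
  assumes d: "\<delta> > 0"
  shows "(\<integral>\<^sup>+x. ennreal (exp (- \<delta> * \<bar>x\<bar>)) \<partial>lborel) < \<infinity>"
proof -
  define h where "h = (\<lambda>y::real. ennreal (y ^ 0 * exp (- y)) * indicator {0 ..} y)"
  have hm[measurable]: "h \<in> borel_measurable borel" unfolding h_def by measurable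
  have h1: "(\<integral>\<^sup>+y. h y \<partial>lborel) = 1"
    unfolding h_def using nn_intergal_power_times_exp_Ici[of 0] by simp
  have fin: "(\<integral>\<^sup>+x. h (0 + c * x) \<partial>lborel) < \<infinity>" if c: "c \<noteq> 0" for c
  proof -
    have "1 = ennreal \<bar>c\<bar> * (\<integral>\<^sup>+x. h (0 + c * x) \<partial>lborel)"
      using nn_integral_real_affine[OF hm c, of 0] h1 by simp
    show ?thesis
    proof (rule ccontr)
      assume "\<not> (\<integral>\<^sup>+x. h (0 + c * x) \<partial>lborel) < \<infinity>"
      then have "(\<integral>\<^sup>+x. h (0 + c * x) \<partial>lborel) = \<infinity>" by (simp add: less_top[symmetric])
      then have "ennreal \<bar>c\<bar> * (\<integral>\<^sup>+x. h (0 + c * x) \<partial>lborel) = \<infinity>"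
        using c by (simp add: ennreal_mult_eq_top_iff)
      then show False using \<open>1 = _\<close> by simp
    qed
  qed
  have le: "ennreal (exp (- \<delta> * \<bar>x\<bar>)) \<le> h (0 + \<delta> * x) + h (0 + (-\<delta>) * x)" for x
  proof (cases "x \<ge> 0")
    case True
    then have "h (0 + \<delta> * x) = ennreal (exp (- \<delta> * \<bar>x\<bar>))" unfolding h_def using d by simp
    then show ?thesis by simp
  next
    case False
    have "\<delta> * x < 0" using d False by (simp add: mult_pos_neg)
    then have "h (0 + (-\<delta>) * x) = ennreal (exp (- \<delta> * \<bar>x\<bar>))"
      unfolding h_def using False by (simp add: indicator_def)
    then show ?thesis by simp
  qed
  have "(\<integral>\<^sup>+x. ennreal (exp (- \<delta> * \<bar>x\<bar>)) \<partial>lborel)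
      \<le> (\<integral>\<^sup>+x. h (0 + \<delta> * x) + h (0 + (-\<delta>) * x) \<partial>lborel)"
    by (intro nn_integral_mono le)
  also have "\<dots> = (\<integral>\<^sup>+x. h (0 + \<delta> * x) \<partial>lborel) + (\<integral>\<^sup>+x. h (0 + (-\<delta>) * x) \<partial>lborel)"
    by (rule nn_integral_add) auto
  also have "\<dots> < \<infinity>" using fin[of \<delta>] fin[of "- \<delta>"] d by simp
  finally show ?thesis .
qed


lemma exp_norm_finite:
  assumes g: "\<gamma> > 0"
  shows "(\<integral>\<^sup>+u. ennreal (exp (- \<gamma> * norm (u::'a::euclidean_space))) \<partial>lborel) < \<infinity>"
proof -
  define \<delta> where "\<delta> = \<gamma> / DIM('a)"
  have d: "\<delta> > 0" unfolding \<delta>_def using g by simp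
  have le: "ennreal (exp (- \<gamma> * norm u)) \<le> (\<Prod>b\<in>Basis. ennreal (exp (- \<delta> * \<bar>u \<bullet> b\<bar>)))" for u :: 'a
  proof -
    have "(\<Sum>b\<in>Basis. \<bar>u \<bullet> b\<bar>) \<le> of_nat (card (Basis::'a set)) * norm u"
      by (rule sum_bounded_above) (rule Basis_le_norm)
    then have "\<delta> * (\<Sum>b\<in>Basis. \<bar>u \<bullet> b\<bar>) \<le> \<delta> * (of_nat DIM('a) * norm u)"
      using d by (intro mult_left_mono) auto
    also have "\<dots> = \<gamma> * norm u" unfolding \<delta>_def by simp
    finally have "exp (- \<gamma> * norm u) \<le> exp (\<Sum>b\<in>Basis. - \<delta> * \<bar>u \<bullet> b\<bar>)"
      by (simp add: sum_negf sum_distrib_left[symmetric])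
    also have "\<dots> = (\<Prod>b\<in>Basis. exp (- \<delta> * \<bar>u \<bullet> b\<bar>))" by (rule exp_sum) simp
    finally show ?thesis by (simp add: prod_ennreal ennreal_leI)
  qed
  have "(\<integral>\<^sup>+u. ennreal (exp (- \<gamma> * norm (u::'a))) \<partial>lborel)
      \<le> (\<integral>\<^sup>+u. (\<Prod>b\<in>Basis. ennreal (exp (- \<delta> * \<bar>(u::'a) \<bullet> b\<bar>))) \<partial>lborel)"
    by (rule nn_integral_mono) (rule le)
  also have "\<dots> = (\<Prod>b\<in>(Basis::'a set). (\<integral>\<^sup>+x. ennreal (exp (- \<delta> * \<bar>x\<bar>)) \<partial>lborel))"
    by (rule nn_integral_lborel_prod) auto
  also have "\<dots> < \<infinity>"
    using exp_abs_finite_1d[OF d] by (simp add: power_less_top_ennreal)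
  finally show ?thesis .
qed


lemma logdens_meas[measurable]: "logdens K \<alpha> \<omega> \<eta> \<in> borel_measurable borel"
  unfolding logdens_def by measurable

lemma gfun_meas[measurable]: "gfun K a c \<in> borel_measurable borel"
  unfolding gfun_def phi_def by measurable

theorem proposition3:
  fixes K :: nat and \<alpha> :: "nat \<Rightarrow> real^'n" and \<omega> :: "nat \<Rightarrow> real"
  assumes "\<And>k. k < K \<Longrightarrow> \<omega> k > 0"
  shows "\<exists>M>0. \<forall>(\<eta>::real^'n) \<theta>h.
           (\<forall>\<theta>. logdens K \<alpha> \<omega> \<eta> \<theta> \<le> logdens K \<alpha> \<omega> \<eta> \<theta>h) \<longrightarrow>
           (let B = exp (logdens K \<alpha> \<omega> \<eta> \<theta>h) / sqrt (det (infomat K \<alpha> \<omega> \<theta>h));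
                J = (LINT \<theta>|lborel. (2 * pi) powr (- real CARD('n) / 2) * exp (logdens K \<alpha> \<omega> \<eta> \<theta>))
            in B / M \<le> J \<and> J \<le> M * B)"
proof -
  define A where "A = (\<Sum>k<K. norm (\<alpha> k)) + 1"
  have A1: "A \<ge> 1" unfolding A_def by (simp add: sum_nonneg)
  define r where "r = 1 / A"
  have r: "r > 0" unfolding r_def using A1 by simp
  have ar0: "norm (\<alpha> k) * r \<le> 1" if "k < K" for k
  proof -
    have "norm (\<alpha> k) \<le> (\<Sum>k<K. norm (\<alpha> k))"
      using that by (intro member_le_sum) auto
    then have "norm (\<alpha> k) \<le> A" unfolding A_def by simp
    then show ?thesis unfolding r_def using A1 by (simp add: field_simps)
  qed
  have ar: "\<And>k. k < K \<Longrightarrow> norm (\<alpha> k) * r \<le> 1" using ar0 by blast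
  define \<beta> where "\<beta> = r / (2 * exp 1)"
  have \<beta>: "\<beta> > 0" unfolding \<beta>_def using r by simp
  define CU where "CU = exp (r\<^sup>2 / (2 * exp 1))"
  define CL where "CL = exp (- (exp 1 / 2) * r\<^sup>2)"
  define F where "F = (\<lambda>u::real^'n. ennreal (CU * exp (- \<beta> * norm u)))"
  define Lo where "Lo = (\<lambda>u::real^'n. ennreal CL * indicator (ball 0 r) u)"
  have Fm[measurable]: "F \<in> borel_measurable borel" unfolding F_def by measurable
  have Lom[measurable]: "Lo \<in> borel_measurable borel" unfolding Lo_def by (intro borel_measurable_times_ennreal borel_measurable_const borel_measurable_indicator) simp
  define IU where "IU = (\<integral>\<^sup>+u. F u \<partial>lborel)"
  define IL where "IL = (\<integral>\<^sup>+u. Lo u \<partial>lborel)"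
  have IUfin: "IU < \<infinity>"
  proof -
    have "IU = ennreal CU * (\<integral>\<^sup>+u. ennreal (exp (- \<beta> * norm (u::real^'n))) \<partial>lborel)"
    proof -
      have "IU = (\<integral>\<^sup>+u. ennreal CU * ennreal (exp (- \<beta> * norm (u::real^'n))) \<partial>lborel)"
        unfolding IU_def F_def CU_def by (simp add: ennreal_mult)
      also have "\<dots> = ennreal CU * (\<integral>\<^sup>+u. ennreal (exp (- \<beta> * norm (u::real^'n))) \<partial>lborel)"
        by (rule nn_integral_cmult) simp
      finally show ?thesis .
    qed
    then show ?thesis using exp_norm_finite[OF \<beta>, where 'a="real^'n"]
      by (simp add: ennreal_mult_less_top)
  qed
  have ILeq: "IL = ennreal CL * emeasure lborel (ball (0::real^'n) r)"
    unfolding IL_def Lo_def by (simp add: nn_integral_cmult_indicator)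
  have ball_pos: "emeasure lborel (ball (0::real^'n) r) = ennreal (measure lborel (ball (0::real^'n) r))"
    "measure lborel (ball (0::real^'n) r) > 0"
    using emeasure_lborel_ball_finite[of "0::real^'n" r] r
    by (auto simp: emeasure_eq_ennreal_measure content_ball_pos)
  define ILr where "ILr = CL * measure lborel (ball (0::real^'n) r)"
  have ILr: "ILr > 0" unfolding ILr_def CL_def using ball_pos by simp
  have ILr_eq: "IL = ennreal ILr" unfolding ILeq ILr_def ball_pos(1) CL_def by (simp add: ennreal_mult)
  define IUr where "IUr = enn2real IU"
  have IUr_eq: "IU = ennreal IUr" unfolding IUr_def using IUfin by (simp add: less_top)
  define P where "P = (2 * pi) powr (- real CARD('n) / 2)"
  have P: "P > 0" unfolding P_def by simp
  define M where "M = max (P * IUr) (1 / (P * ILr))"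
  have M: "M > 0" unfolding M_def using P ILr by (simp add: less_max_iff_disj)
  show ?thesis
  proof (intro exI[of _ M] conjI allI impI)
    show "M > 0" by (rule M)
    fix \<eta> :: "real^'n" and \<theta>h :: "real^'n"
    assume max: "\<forall>\<theta>. logdens K \<alpha> \<omega> \<eta> \<theta> \<le> logdens K \<alpha> \<omega> \<eta> \<theta>h"
    define c where "c = (\<lambda>k. \<omega> k * exp (\<alpha> k \<bullet> \<theta>h))"
    have cpos0: "c k \<ge> 0" if "k < K" for k unfolding c_def using assms[OF that] by simp
    have cpos: "\<And>k. k < K \<Longrightarrow> c k \<ge> 0" using cpos0 by blast
    have "\<exists>R::real^'n^'n. invertible R \<and> transpose R ** R = mat 1 + (\<Sum>k<K. c k *\<^sub>R outer (\<alpha> k) (\<alpha> k))"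
      by (rule sqrt_decomp) (rule cpos)
    then obtain R :: "real^'n^'n" where R: "invertible R"
      "transpose R ** R = mat 1 + (\<Sum>k<K. c k *\<^sub>R outer (\<alpha> k) (\<alpha> k))"
      by blast
    have info: "infomat K \<alpha> \<omega> \<theta>h = transpose R ** R"
      unfolding infomat_def R(2) c_def ..
    have sdet: "sqrt (det (infomat K \<alpha> \<omega> \<theta>h)) = \<bar>det R\<bar>"
      unfolding info det_mul det_transpose by (simp add: real_sqrt_mult_self)
    have dR: "det R \<noteq> 0" using R(1) by (simp add: invertible_det_nz)
    have grad: "\<eta> = \<theta>h + (\<Sum>k<K. (\<omega> k * exp (\<alpha> k \<bullet> \<theta>h)) *\<^sub>R \<alpha> k)"
      by (rule grad_zero[OF max])
    define fh where "fh = logdens K \<alpha> \<omega> \<eta> \<theta>h"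
    have dec: "logdens K \<alpha> \<omega> \<eta> (\<theta>h + \<theta>) = fh + gfun K \<alpha> c \<theta>" for \<theta>
      unfolding fh_def c_def by (rule decomp[OF grad])
    define G where "G = (\<integral>\<^sup>+\<theta>. ennreal (exp (gfun K \<alpha> c \<theta>)) \<partial>lborel)"
    have nR: "norm (R *v \<theta>) = sqrt (qf K \<alpha> c \<theta>)" for \<theta> by (rule norm_R[OF R(2)])
    have up: "ennreal (exp (gfun K \<alpha> c \<theta>)) \<le> F (R *v \<theta>)" for \<theta>
    proof -
      have "gfun K \<alpha> c \<theta> \<le> - (r * sqrt (qf K \<alpha> c \<theta>) - r\<^sup>2) / (2 * exp 1)"
        using g_upper[OF cpos r ar, where \<theta>=\<theta>] by simp
      also have "\<dots> = r\<^sup>2 / (2 * exp 1) + (- \<beta> * norm (R *v \<theta>))"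
        unfolding nR \<beta>_def by (simp add: field_simps)
      finally have "exp (gfun K \<alpha> c \<theta>) \<le> CU * exp (- \<beta> * norm (R *v \<theta>))"
        unfolding CU_def by (simp add: exp_add[symmetric])
      then show ?thesis unfolding F_def by (simp add: ennreal_leI)
    qed
    have lo: "Lo (R *v \<theta>) \<le> ennreal (exp (gfun K \<alpha> c \<theta>))" for \<theta>
    proof (cases "R *v \<theta> \<in> ball 0 r")
      case True
      then have X: "sqrt (qf K \<alpha> c \<theta>) \<le> r" using nR[of \<theta>] by simp
      have "gfun K \<alpha> c \<theta> \<ge> - (exp 1 / 2) * r\<^sup>2" using g_lower_ball[OF cpos ar X] by simp
      then have "CL \<le> exp (gfun K \<alpha> c \<theta>)" unfolding CL_def by simp
      then show ?thesis unfolding Lo_def using True by (simp add: ennreal_leI)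
    next
      case False
      then show ?thesis unfolding Lo_def by simp
    qed
    have IUe: "IU = ennreal \<bar>det R\<bar> * (\<integral>\<^sup>+\<theta>. F (R *v \<theta>) \<partial>lborel)"
      unfolding IU_def by (rule nn_integral_linear[OF R(1) Fm])
    have ILe: "IL = ennreal \<bar>det R\<bar> * (\<integral>\<^sup>+\<theta>. Lo (R *v \<theta>) \<partial>lborel)"
      unfolding IL_def by (rule nn_integral_linear[OF R(1) Lom])
    have GU: "ennreal \<bar>det R\<bar> * G \<le> IU"
      unfolding IUe G_def by (intro mult_left_mono nn_integral_mono up) auto
    have GL: "IL \<le> ennreal \<bar>det R\<bar> * G"
      unfolding ILe G_def by (intro mult_left_mono nn_integral_mono lo) auto
    have Gfin: "G < \<infinity>"
    proof (rule ccontr)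
      assume "\<not> G < \<infinity>"
      then have "G = \<infinity>" by (simp add: less_top[symmetric])
      then have "ennreal \<bar>det R\<bar> * G = \<infinity>" using dR by (simp add: ennreal_mult_eq_top_iff)
      then show False using GU IUfin by simp
    qed
    define g0 where "g0 = enn2real G"
    have g0: "G = ennreal g0" "g0 \<ge> 0" unfolding g0_def using Gfin by (auto simp: less_top)
    have eqG: "ennreal (\<bar>det R\<bar> * g0) = ennreal \<bar>det R\<bar> * G"
      using g0 by (simp add: ennreal_mult)
    have IUr0: "IUr \<ge> 0" unfolding IUr_def by simp
    have "ennreal (\<bar>det R\<bar> * g0) \<le> ennreal IUr" using GU IUr_eq eqG by simp
    then have gU: "\<bar>det R\<bar> * g0 \<le> IUr" using IUr0 by (simp add: ennreal_le_iff)
    have "ennreal ILr \<le> ennreal (\<bar>det R\<bar> * g0)" using GL ILr_eq eqG by simp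
    then have gL: "ILr \<le> \<bar>det R\<bar> * g0" using g0(2) by (simp add: ennreal_le_iff)
    have shift: "(\<integral>\<^sup>+\<theta>. ennreal (P * exp (logdens K \<alpha> \<omega> \<eta> \<theta>)) \<partial>lborel)
        = (\<integral>\<^sup>+\<theta>. ennreal (P * exp (logdens K \<alpha> \<omega> \<eta> (\<theta>h + \<theta>))) \<partial>lborel)"
    proof -
      have "(\<integral>\<^sup>+\<theta>. ennreal (P * exp (logdens K \<alpha> \<omega> \<eta> \<theta>)) \<partial>lborel)
          = (\<integral>\<^sup>+\<theta>. ennreal (P * exp (logdens K \<alpha> \<omega> \<eta> \<theta>)) \<partial>distr lborel borel ((+) \<theta>h))"
        by (simp add: lborel_distr_plus)
      also have "\<dots> = (\<integral>\<^sup>+\<theta>. ennreal (P * exp (logdens K \<alpha> \<omega> \<eta> (\<theta>h + \<theta>))) \<partial>lborel)"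
        by (simp add: nn_integral_distr)
      finally show ?thesis .
    qed
    also have "\<dots> = (\<integral>\<^sup>+\<theta>. ennreal (P * exp fh) * ennreal (exp (gfun K \<alpha> c \<theta>)) \<partial>lborel)"
      unfolding dec using P by (simp add: exp_add ennreal_mult mult.assoc)
    also have "\<dots> = ennreal (P * exp fh) * G"
      unfolding G_def by (simp add: nn_integral_cmult)
    finally have NN: "(\<integral>\<^sup>+\<theta>. ennreal (P * exp (logdens K \<alpha> \<omega> \<eta> \<theta>)) \<partial>lborel) = ennreal (P * exp fh * g0)"
      unfolding g0(1) using P g0(2) by (simp add: ennreal_mult)
    have J: "(LINT \<theta>|lborel. P * exp (logdens K \<alpha> \<omega> \<eta> \<theta>)) = P * exp fh * g0"
      using P g0(2) by (subst integral_eq_nn_integral) (auto simp: NN)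
    define B where "B = exp fh / \<bar>det R\<bar>"
    have Bpos: "B > 0" unfolding B_def using dR by simp
    have JB: "P * exp fh * g0 = P * (\<bar>det R\<bar> * g0) * B"
      unfolding B_def using dR by (simp add: field_simps)
    have upper: "P * exp fh * g0 \<le> M * B"
    proof -
      have "P * (\<bar>det R\<bar> * g0) * B \<le> P * IUr * B"
        using gU P Bpos by (intro mult_right_mono mult_left_mono) auto
      also have "\<dots> \<le> M * B" unfolding M_def using Bpos by (intro mult_right_mono) auto
      finally show ?thesis unfolding JB .
    qed
    have lower: "B / M \<le> P * exp fh * g0"
    proof -
      have m1: "1 / (P * ILr) \<le> M" unfolding M_def by simp
      have "1 / M \<le> 1 / (1 / (P * ILr))"
        using m1 P ILr M by (intro divide_left_mono) auto
      then have "1 / M \<le> P * ILr" by simp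
      then have "B * (1 / M) \<le> B * (P * ILr)" using Bpos by (intro mult_left_mono) auto
      then have "B / M \<le> P * ILr * B" by (simp add: mult.commute)
      also have "\<dots> \<le> P * (\<bar>det R\<bar> * g0) * B"
        using gL P Bpos by (intro mult_right_mono mult_left_mono) auto
      finally show ?thesis unfolding JB .
    qed
    show "let B = exp (logdens K \<alpha> \<omega> \<eta> \<theta>h) / sqrt (det (infomat K \<alpha> \<omega> \<theta>h));
                J = (LINT \<theta>|lborel. (2 * pi) powr (- real CARD('n) / 2) * exp (logdens K \<alpha> \<omega> \<eta> \<theta>))
            in B / M \<le> J \<and> J \<le> M * B"
      unfolding Let_def P_def[symmetric] J sdet fh_def[symmetric] B_def[symmetric]
      using upper lower by simp
  qed
qed

end
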